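(* In the Poisson matching problem $PM(\lambda,\mu)$ (defined in the context), for any blue points $b_1,b_2\in\mathcal{B}$, if $\mathcal{P}(b_1)\cap\mathcal{P}(b_2)\neq\emptyset$ then $\mathcal{P}(b_1)=\mathcal{P}(b_2)$.
   Context: Poisson matching problem $PM(\lambda,\mu)$, $0<\lambda\le\mu$: $\mathcal{B}$ (blue points) and $\mathcal{R}$ (red points) are independent homogeneous Poisson point processes on $\mathbb{R}$ of intensities $\lambda$ and $\mu$ respectively; $\mathcal{S}=\mathcal{B}\cup\mathcal{R}$. A matching is a map $\mathcal{M}:\mathcal{S}\to\mathcal{S}\cup\{\infty\}$ with $\mathcal{M}(r)\in\mathcal{B}\cup\{\infty\}$ for red $r$, $\mathcal{M}(b)\in\mathcal{R}\cup\{\infty\}$ for blue $b$, and $\mathcal{M}(r)=b$ iff $\mathcal{M}(b)=r$. The matching segment $I_\mathcal{M}(x)$ is the open interval with endpoints $x$ and $\mathcal{M}(x)$ ($(x,\infty)$ if $x$ is unmatched). $\mathcal{M}$ is nested if for all $x,y\in\mathcal{S}$, $x\in I_\mathcal{M}(y)$ implies $\mathcal{M}(x)$ lies in the closure of $I_\mathcal{M}(y)$. For $b\in\mathcal{B}$, the set of potential matches of $b$ is $\mathcal{P}(b)=\{r\in\mathcal{R}:\text{there is a nested matching }\mathcal{M}\text{ with }\mathcal{M}(b)=r\}$. *)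

theory Defs
  imports Complex_Main "HOL-Library.Extended_Real"
begin

text \<open>Points are reals; a partner value of \<infinity> (in ereal) means "unmatched".\<close>

definition is_matching :: "real set \<Rightarrow> real set \<Rightarrow> (real \<Rightarrow> ereal) \<Rightarrow> bool" where
  "is_matching B R M \<longleftrightarrow>
     (\<forall>r\<in>R. M r \<in> ereal ` B \<union> {\<infinity>}) \<and>
     (\<forall>b\<in>B. M b \<in> ereal ` R \<union> {\<infinity>}) \<and>
     (\<forall>r\<in>R. \<forall>b\<in>B. M r = ereal b \<longleftrightarrow> M b = ereal r)"

definition match_seg :: "(real \<Rightarrow> ereal) \<Rightarrow> real \<Rightarrow> real set" where
  "match_seg M x = {y. min (ereal x) (M x) < ereal y \<and> ereal y < max (ereal x) (M x)}"

definition match_seg_closure :: "(real \<Rightarrow> ereal) \<Rightarrow> real \<Rightarrow> ereal set" where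
  "match_seg_closure M x = {z. min (ereal x) (M x) \<le> z \<and> z \<le> max (ereal x) (M x)}"

definition nested :: "real set \<Rightarrow> (real \<Rightarrow> ereal) \<Rightarrow> bool" where
  "nested S M \<longleftrightarrow> (\<forall>x\<in>S. \<forall>y\<in>S. x \<in> match_seg M y \<longrightarrow> M x \<in> match_seg_closure M y)"

definition potential_matches :: "real set \<Rightarrow> real set \<Rightarrow> real \<Rightarrow> real set" where
  "potential_matches B R b =
     {r \<in> R. \<exists>M. is_matching B R M \<and> nested (B \<union> R) M \<and> M b = ereal r}"

end

theory Submission
  imports Defs
begin

definition ncm :: "real set \<Rightarrow> real set \<Rightarrow> real set \<Rightarrow> (real \<Rightarrow> real) \<Rightarrow> bool" where
  "ncm B R F N \<longleftrightarrow> (\<forall>x\<in>F\<inter>B. N x \<in> F\<inter>R) \<and> (\<forall>x\<in>F\<inter>R. N x \<in> F\<inter>B) \<and> (\<forall>x\<in>F. N (N x) = x) \<and>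
     (\<forall>x\<in>F. \<forall>y\<in>F. min y (N y) < x \<and> x < max y (N y) \<longrightarrow> min y (N y) \<le> N x \<and> N x \<le> max y (N y))"

lemma nc_match:
  fixes B R F :: "real set"
  assumes "finite F" "F \<subseteq> B \<union> R" "B \<inter> R = {}" "card (B\<inter>F) = card (R\<inter>F)"
  shows "\<exists>N. ncm B R F N"
  using assms
proof (induction "card F" arbitrary: F rule: less_induct)
  case less
  show ?case
  proof (cases "F = {}")
    case True
    then show ?thesis unfolding ncm_def by auto
  next
    case False
    have cF: "card F = card (B\<inter>F) + card (R\<inter>F)"
    proof -
      have "F = (B\<inter>F) \<union> (R\<inter>F)" using less.prems by blast
      then have "card F = card ((B\<inter>F) \<union> (R\<inter>F))" by simp
      also have "\<dots> = card (B\<inter>F) + card (R\<inter>F)"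
        using less.prems by (intro card_Un_disjoint) auto
      finally show ?thesis .
    qed
    have "card F > 0" using False less.prems by auto
    then have "card (B\<inter>F) > 0" "card (R\<inter>F) > 0" using cF less.prems by auto
    then obtain p q where pq: "p \<in> B\<inter>F" "q \<in> R\<inter>F" by (metis card_gt_0_iff ex_in_conv)
    define P where "P = (B\<inter>F) \<times> (R\<inter>F)"
    have finP: "finite P" unfolding P_def using less.prems by auto
    have "(p,q) \<in> P" using pq P_def by auto
    define d where "d = Min ((\<lambda>(u,v). \<bar>u-v\<bar>) ` P)"
    have "d \<in> (\<lambda>(u,v). \<bar>u-v\<bar>) ` P" unfolding d_def using finP \<open>(p,q)\<in>P\<close> by (intro Min_in) auto
    then obtain u v where uv: "(u,v) \<in> P" "\<bar>u-v\<bar> = d" by auto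
    have dmin: "\<And>a c. (a,c) \<in> P \<Longrightarrow> d \<le> \<bar>a-c\<bar>" unfolding d_def using finP
      by (intro Min_le) force+
    have uB: "u \<in> B" "u \<in> F" and vR: "v \<in> R" "v \<in> F" using uv P_def by auto
    have uv_ne: "u \<noteq> v" using uB vR less.prems by auto
    have nobtw: "\<And>z. z \<in> F \<Longrightarrow> \<not> (min u v < z \<and> z < max u v)"
    proof
      fix z assume z: "z \<in> F" "min u v < z \<and> z < max u v"
      show False
      proof (cases "z \<in> B")
        case True
        then have "(z,v) \<in> P" using z vR P_def by auto
        then have "d \<le> \<bar>z - v\<bar>" by (rule dmin)
        then show False using z uv by (auto simp: min_def max_def split: if_splits)
      next
        case False
        then have "z \<in> R" using z less.prems by auto
        then have "(u,z) \<in> P" using z uB P_def by auto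
        then have "d \<le> \<bar>u - z\<bar>" by (rule dmin)
        then show False using z uv by (auto simp: min_def max_def split: if_splits)
      qed
    qed
    define F' where "F' = F - {u,v}"
    have cF': "card F' < card F" unfolding F'_def using uB vR less.prems
      by (metis Diff_insert2 card_Diff2_less)
    have b1: "B \<inter> F' = B\<inter>F - {u}" unfolding F'_def using vR less.prems by auto
    have b2: "R \<inter> F' = R\<inter>F - {v}" unfolding F'_def using uB less.prems by auto
    have "card (B\<inter>F') = card (R\<inter>F')" unfolding b1 b2 using uB vR less.prems by auto
    then obtain N' where N': "ncm B R F' N'"
      using less.hyps[OF cF'] less.prems unfolding F'_def by auto
    define N where "N = N'(u:=v, v:=u)"
    have N'F: "\<And>x. x \<in> F' \<Longrightarrow> N' x \<in> F'" using N' less.prems unfolding ncm_def F'_def by blast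
    have NN': "\<And>x. x \<in> F' \<Longrightarrow> N x = N' x" unfolding N_def F'_def by auto
    have Nu: "N u = v" "N v = u" unfolding N_def using uv_ne by auto
    have "ncm B R F N"
      unfolding ncm_def
    proof (intro conjI)
     show "\<forall>x\<in>F\<inter>B. N x \<in> F\<inter>R"
     proof
      fix x assume x: "x \<in> F \<inter> B"
      show "N x \<in> F \<inter> R"
      proof (cases "x \<in> F'")
        case True then show ?thesis using N' x NN' unfolding ncm_def F'_def by auto
      next
        case False then have "x = u" using x F'_def vR less.prems by auto
        then show ?thesis using Nu vR by auto
      qed
     qed
    next
     show "\<forall>x\<in>F\<inter>R. N x \<in> F\<inter>B"
     proof
      fix x assume x: "x \<in> F \<inter> R"
      show "N x \<in> F \<inter> B"
      proof (cases "x \<in> F'")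
        case True then show ?thesis using N' x NN' unfolding ncm_def F'_def by auto
      next
        case False then have "x = v" using x F'_def uB less.prems by auto
        then show ?thesis using Nu uB by auto
      qed
     qed
    next
     show "\<forall>x\<in>F. N (N x) = x"
     proof
      fix x assume x: "x \<in> F"
      show "N (N x) = x"
      proof (cases "x \<in> F'")
        case True then show ?thesis using N' NN' N'F unfolding ncm_def by auto
      next
        case False then have "x = u \<or> x = v" using x F'_def by auto
        then show ?thesis using Nu by auto
      qed
     qed
    next
     show "\<forall>x\<in>F. \<forall>y\<in>F. min y (N y) < x \<and> x < max y (N y) \<longrightarrow> min y (N y) \<le> N x \<and> N x \<le> max y (N y)"
     proof (intro ballI impI)
      fix x y assume xy: "x \<in> F" "y \<in> F" "min y (N y) < x \<and> x < max y (N y)"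
      show "min y (N y) \<le> N x \<and> N x \<le> max y (N y)"
      proof (cases "y \<in> F'")
        case False
        then have "y = u \<or> y = v" using xy F'_def by auto
        then have "min u v < x \<and> x < max u v" using xy Nu by (auto simp: min_def max_def split: if_splits)
        then show ?thesis using nobtw xy by blast
      next
        case yF: True
        have Ny: "N y = N' y" "N' y \<in> F'" using NN' N'F yF by auto
        show ?thesis
        proof (cases "x \<in> F'")
          case True
          then show ?thesis using N' yF xy Ny NN' unfolding ncm_def by auto
        next
          case False
          then have xuv: "x = u \<or> x = v" using xy F'_def by auto
          have yF2: "y \<in> F" "N' y \<in> F" using yF Ny F'_def by auto
          have ny: "y \<noteq> u" "y \<noteq> v" "N' y \<noteq> u" "N' y \<noteq> v" using yF Ny F'_def by auto
          have "\<not> (min u v < y \<and> y < max u v)" "\<not> (min u v < N' y \<and> N' y < max u v)"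
            using nobtw yF2 by auto
          then show ?thesis using xuv Nu xy Ny ny by (auto simp: min_def max_def split: if_splits)
        qed
      qed
     qed
    qed
    then show ?thesis by blast
  qed
qed


definition betw :: "real \<Rightarrow> real \<Rightarrow> real set" where
  "betw a c = {min a c <..< max a c}"

lemma min_ereal: "min (ereal a) (ereal c) = ereal (min a c)"
  by (simp add: min_def)
lemma max_ereal: "max (ereal a) (ereal c) = ereal (max a c)"
  by (simp add: max_def)

lemma eless: "ereal a < ereal c \<longleftrightarrow> a < c" by simp

lemma seg_eq: assumes "M b = ereal r" shows "match_seg M b = betw b r"
proof -
  have "match_seg M b = {y. ereal (min b r) < ereal y \<and> ereal y < ereal (max b r)}"
    unfolding match_seg_def assms min_ereal max_ereal by (rule refl)
  also have "\<dots> = betw b r" unfolding betw_def eless by auto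
  finally show ?thesis .
qed
lemma clos_eq: assumes "M b = ereal r" shows "match_seg_closure M b = {z. ereal (min b r) \<le> z \<and> z \<le> ereal (max b r)}"
  unfolding match_seg_closure_def assms min_ereal max_ereal by (rule refl)

lemma nec:
  assumes disj: "B \<inter> R = {}" and fin: "finite ((B \<union> R) \<inter> betw b r)"
    and b: "b \<in> B" and r: "r \<in> R"
    and M: "is_matching B R M" "nested (B \<union> R) M" "M b = ereal r"
  shows "card (B \<inter> betw b r) = card (R \<inter> betw b r)"
proof -
  let ?I = "betw b r"
  have sym: "\<And>r' b'. r' \<in> R \<Longrightarrow> b' \<in> B \<Longrightarrow> M r' = ereal b' \<longleftrightarrow> M b' = ereal r'"
    using M(1) unfolding is_matching_def by blast
  have Mr: "M r = ereal b" using sym[OF r b] M(3) by simp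
  have imR: "\<And>x. x \<in> R \<Longrightarrow> M x \<in> ereal ` B \<union> {\<infinity>}" and imB: "\<And>x. x \<in> B \<Longrightarrow> M x \<in> ereal ` R \<union> {\<infinity>}"
    using M(1) unfolding is_matching_def by auto
  have inclos: "\<And>x. x \<in> B \<union> R \<Longrightarrow> x \<in> ?I \<Longrightarrow> ereal (min b r) \<le> M x \<and> M x \<le> ereal (max b r)"
  proof -
    fix x assume x: "x \<in> B \<union> R" "x \<in> ?I"
    have "x \<in> match_seg M b" using seg_eq[of M b r, OF M(3)] x by simp
    then have "M x \<in> match_seg_closure M b" using M(2) x b unfolding nested_def by blast
    then show "ereal (min b r) \<le> M x \<and> M x \<le> ereal (max b r)" using clos_eq[of M b r, OF M(3)] by auto
  qed
  have xI: "\<And>x. x \<in> ?I \<Longrightarrow> x \<noteq> b \<and> x \<noteq> r" unfolding betw_def by auto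
  have ninf: "\<And>z m. z \<le> ereal m \<Longrightarrow> z \<noteq> \<infinity>" by auto
  have f1: "\<And>x. x \<in> B \<inter> ?I \<Longrightarrow> \<exists>y. M x = ereal y \<and> y \<in> R \<inter> ?I"
  proof -
    fix x assume x: "x \<in> B \<inter> ?I"
    have c: "ereal (min b r) \<le> M x \<and> M x \<le> ereal (max b r)" using inclos x by auto
    have "M x \<noteq> \<infinity>" using ninf c by blast
    then obtain y where y: "M x = ereal y" "y \<in> R" using imB[of x] x by auto
    have "y \<noteq> b" using y disj b by auto
    moreover have "y \<noteq> r"
    proof
      assume "y = r" then have "M r = ereal x" using sym[OF r, of x] x y by auto
      then show False using Mr xI x by auto
    qed
    ultimately have "y \<in> ?I" using c y unfolding betw_def by (auto simp: min_def max_def split: if_splits)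
    then show "\<exists>y. M x = ereal y \<and> y \<in> R \<inter> ?I" using y by auto
  qed
  have f2: "\<And>x. x \<in> R \<inter> ?I \<Longrightarrow> \<exists>y. M x = ereal y \<and> y \<in> B \<inter> ?I"
  proof -
    fix x assume x: "x \<in> R \<inter> ?I"
    have c: "ereal (min b r) \<le> M x \<and> M x \<le> ereal (max b r)" using inclos x by auto
    have "M x \<noteq> \<infinity>" using ninf c by blast
    then obtain y where y: "M x = ereal y" "y \<in> B" using imR[of x] x by auto
    have "y \<noteq> r" using y disj r by auto
    moreover have "y \<noteq> b"
    proof
      assume "y = b" then have "M b = ereal x" using sym[of x b] b x y by auto
      then show False using M(3) xI x by auto
    qed
    ultimately have "y \<in> ?I" using c y unfolding betw_def by (auto simp: min_def max_def split: if_splits)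
    then show "\<exists>y. M x = ereal y \<and> y \<in> B \<inter> ?I" using y by auto
  qed
  let ?f = "\<lambda>x. real_of_ereal (M x)"
  have finB: "finite (B \<inter> ?I)" "finite (R \<inter> ?I)" using fin by (metis finite_Int inf_sup_distrib2 finite_Un)+
  have "card (B \<inter> ?I) \<le> card (R \<inter> ?I)"
  proof (rule card_inj_on_le[where f = ?f])
    show "inj_on ?f (B \<inter> ?I)"
    proof (rule inj_onI)
      fix x1 x2 assume h: "x1 \<in> B \<inter> ?I" "x2 \<in> B \<inter> ?I" "?f x1 = ?f x2"
      obtain y1 where y1: "M x1 = ereal y1" "y1 \<in> R \<inter> ?I" using f1 h by blast
      obtain y2 where y2: "M x2 = ereal y2" "y2 \<in> R \<inter> ?I" using f1 h by blast
      have "y1 = y2" using h y1 y2 by simp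
      then have "M y1 = ereal x1" "M y1 = ereal x2" using sym y1 y2 h by auto
      then show "x1 = x2" by simp
    qed
    show "?f ` (B \<inter> ?I) \<subseteq> R \<inter> ?I" using f1 by force
  qed (use finB in auto)
  moreover have "card (R \<inter> ?I) \<le> card (B \<inter> ?I)"
  proof (rule card_inj_on_le[where f = ?f])
    show "inj_on ?f (R \<inter> ?I)"
    proof (rule inj_onI)
      fix x1 x2 assume h: "x1 \<in> R \<inter> ?I" "x2 \<in> R \<inter> ?I" "?f x1 = ?f x2"
      obtain y1 where y1: "M x1 = ereal y1" "y1 \<in> B \<inter> ?I" using f2 h by blast
      obtain y2 where y2: "M x2 = ereal y2" "y2 \<in> B \<inter> ?I" using f2 h by blast
      have "y1 = y2" using h y1 y2 by simp
      then have "M y1 = ereal x1" "M y1 = ereal x2" using sym y1 y2 h by auto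
      then show "x1 = x2" by simp
    qed
    show "?f ` (R \<inter> ?I) \<subseteq> B \<inter> ?I" using f2 by force
  qed (use finB in auto)
  ultimately show ?thesis by simp
qed

lemma suff:
  assumes disj: "B \<inter> R = {}" and fin: "finite ((B \<union> R) \<inter> betw b r)"
    and b: "b \<in> B" and r: "r \<in> R"
    and bal: "card (B \<inter> betw b r) = card (R \<inter> betw b r)"
  shows "r \<in> potential_matches B R b"
proof -
  let ?I = "betw b r"
  define F where "F = (B \<union> R) \<inter> ?I"
  have "B \<inter> F = B \<inter> ?I" "R \<inter> F = R \<inter> ?I" unfolding F_def by auto
  then obtain N where N: "ncm B R F N" using nc_match[of F B R] fin disj bal unfolding F_def by auto
  have NB: "\<And>x. x \<in> F \<inter> B \<Longrightarrow> N x \<in> F \<inter> R" and NR: "\<And>x. x \<in> F \<inter> R \<Longrightarrow> N x \<in> F \<inter> B"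
    and NN: "\<And>x. x \<in> F \<Longrightarrow> N (N x) = x"
    and Nnc: "\<And>x y. x \<in> F \<Longrightarrow> y \<in> F \<Longrightarrow> min y (N y) < x \<and> x < max y (N y) \<Longrightarrow> min y (N y) \<le> N x \<and> N x \<le> max y (N y)"
    using N unfolding ncm_def by blast+
  have FS: "F \<subseteq> B \<union> R" unfolding F_def by auto
  have NF: "\<And>x. x \<in> F \<Longrightarrow> N x \<in> F" using NB NR FS by blast
  have bF: "b \<notin> F" "r \<notin> F" unfolding F_def betw_def by auto
  have br: "b \<noteq> r" using b r disj by auto
  define M where "M x = (if x \<in> F then ereal (N x) else if x = b then ereal r else if x = r then ereal b else \<infinity>)" for x
  have FI: "\<And>x. x \<in> F \<Longrightarrow> min b r < x \<and> x < max b r" unfolding F_def betw_def by auto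
  have ism: "is_matching B R M"
    unfolding is_matching_def
  proof (intro conjI ballI)
    fix x assume "x \<in> R" then show "M x \<in> ereal ` B \<union> {\<infinity>}" using NR b disj unfolding M_def by auto
  next
    fix x assume "x \<in> B" then show "M x \<in> ereal ` R \<union> {\<infinity>}" using NB r disj unfolding M_def by auto
  next
    fix x y assume xy: "x \<in> R" "y \<in> B"
    show "M x = ereal y \<longleftrightarrow> M y = ereal x"
      using xy NN NF bF br disj unfolding M_def by (auto split: if_splits)
  qed
  have MF: "\<And>x. x \<in> F \<Longrightarrow> M x = ereal (N x)" unfolding M_def by simp
  have Mb: "M b = ereal r" and Mr: "M r = ereal b" using bF br unfolding M_def by auto
  have Mo: "\<And>x. x \<notin> F \<Longrightarrow> x \<noteq> b \<Longrightarrow> x \<noteq> r \<Longrightarrow> M x = \<infinity>" unfolding M_def by simp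
  have eleq: "\<And>a c. ereal a \<le> ereal c \<longleftrightarrow> a \<le> c" by simp
  have nst: "nested (B \<union> R) M"
    unfolding nested_def
  proof (intro ballI impI)
    fix x y assume x: "x \<in> B \<union> R" and y: "y \<in> B \<union> R" and xs: "x \<in> match_seg M y"
    show "M x \<in> match_seg_closure M y"
    proof (cases "y \<in> F")
      case True
      have My: "M y = ereal (N y)" using MF True by simp
      have "x \<in> betw y (N y)" using xs seg_eq[of M y, OF My] by simp
      then have xb: "min y (N y) < x \<and> x < max y (N y)" unfolding betw_def by auto
      have "N y \<in> F" using NF True by auto
      then have xF: "x \<in> F" using FI[OF True] FI[of "N y"] xb x unfolding F_def betw_def
        by (auto simp: min_def max_def split: if_splits)
      have "min y (N y) \<le> N x \<and> N x \<le> max y (N y)" using Nnc[OF xF True xb] .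
      then show ?thesis unfolding clos_eq[of M y, OF My] MF[OF xF] by (simp only: mem_Collect_eq eleq)
    next
      case yF: False
      show ?thesis
      proof (cases "y = b \<or> y = r")
        case True
        define z where "z = (if y = b then r else b)"
        have My: "M y = ereal z" using True Mb Mr unfolding z_def by auto
        have mm: "min y z = min b r" "max y z = max b r" using True br unfolding z_def by (auto simp: min_def max_def)
        have "x \<in> betw y z" using xs seg_eq[of M y, OF My] by simp
        then have "x \<in> ?I" unfolding betw_def mm .
        then have xF: "x \<in> F" and "N x \<in> F" using x NF unfolding F_def by auto
        then have "min b r \<le> N x \<and> N x \<le> max b r" using FI[of "N x"] by auto
        then show ?thesis unfolding clos_eq[of M y, OF My] MF[OF xF] mm by (simp only: mem_Collect_eq eleq)
      next
        case False
        then have My: "M y = \<infinity>" using yF Mo by auto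
        have xy: "ereal y < ereal x" using xs My unfolding match_seg_def by auto
        then have xy': "y < x" by simp
        have yout: "\<not> (min b r < y \<and> y < max b r)" using yF y unfolding F_def betw_def by auto
        have cl: "match_seg_closure M y = {z. ereal y \<le> z}" using My unfolding match_seg_closure_def by auto
        have ylo: "y < min b r" if "x \<le> max b r" using that xy' yout False
          by (auto simp: min_def max_def split: if_splits)
        show ?thesis
        proof (cases "x \<in> F")
          case True
          then have "N x \<in> F" using NF by auto
          then have "min b r < N x" "x < max b r" using FI[OF True] FI[of "N x"] by auto
          then have "y \<le> N x" using ylo by auto
          then show ?thesis unfolding cl MF[OF True] by (simp only: mem_Collect_eq eleq)
        next
          case xF: False
          show ?thesis
          proof (cases "x = b \<or> x = r")
            case True
            define w where "w = (if x = b then r else b)"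
            have Mx: "M x = ereal w" using True Mb Mr unfolding w_def by auto
            have "x \<le> max b r" "min b r \<le> w" using True unfolding w_def by auto
            then have "y \<le> w" using ylo by auto
            then show ?thesis unfolding cl Mx by (simp only: mem_Collect_eq eleq)
          next
            case False
            then have "M x = \<infinity>" using xF Mo by auto
            then show ?thesis unfolding cl by simp
          qed
        qed
      qed
    qed
  qed
  show ?thesis unfolding potential_matches_def using r ism nst Mb by blast
qed


lemma split_count:
  fixes X :: "real set"
  assumes fin: "finite (X \<inter> {A..c})" and "A \<le> a" "a < c"
  shows "card (X \<inter> {A..<c}) = card (X \<inter> {A..<a}) + card (X \<inter> {a}) + card (X \<inter> {a<..<c})"
proof -
  have eq: "X \<inter> {A..<c} = ((X \<inter> {A..<a}) \<union> (X \<inter> {a})) \<union> (X \<inter> {a<..<c})"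
    using assms by auto
  have f1: "finite (X \<inter> {A..<a})" "finite (X \<inter> {a})" "finite (X \<inter> {a<..<c})"
    using assms by (auto intro: finite_subset[OF _ fin])
  have "card (X \<inter> {A..<c}) = card ((X \<inter> {A..<a}) \<union> (X \<inter> {a})) + card (X \<inter> {a<..<c})"
    unfolding eq using f1 by (intro card_Un_disjoint) auto
  also have "card ((X \<inter> {A..<a}) \<union> (X \<inter> {a})) = card (X \<inter> {A..<a}) + card (X \<inter> {a})"
    using f1 by (intro card_Un_disjoint) auto
  finally show ?thesis .
qed

definition phi :: "real set \<Rightarrow> real set \<Rightarrow> real \<Rightarrow> real \<Rightarrow> int" where
  "phi B R A x = int (card (B \<inter> {A..<x})) - int (card (R \<inter> {A..<x}))"

lemma pot:
  assumes disj: "B \<inter> R = {}" and b: "b \<in> B" and r: "r \<in> R" and A: "A \<le> b" "A \<le> r"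
    and fin: "finite ((B \<union> R) \<inter> {A..max b r})"
  shows "card (B \<inter> betw b r) = card (R \<inter> betw b r) \<longleftrightarrow> phi B R A r = phi B R A b + 1"
proof -
  have br: "b \<noteq> r" using b r disj by auto
  have finB: "finite (B \<inter> {A..max b r})" "finite (R \<inter> {A..max b r})"
    using fin by (auto intro: finite_subset[OF _ fin])
  have cb: "card (B \<inter> {b}) = 1" "card (R \<inter> {b}) = 0" "card (B \<inter> {r}) = 0" "card (R \<inter> {r}) = 1"
    using b r disj by auto
  show ?thesis
  proof (cases "b < r")
    case True
    have bt: "betw b r = {b<..<r}" unfolding betw_def using True by auto
    have f: "finite (B \<inter> {A..r})" "finite (R \<inter> {A..r})" using finB True by (auto simp: max_def)
    show ?thesis unfolding phi_def bt
      using split_count[OF f(1) A(1) True] split_count[OF f(2) A(1) True] cb by auto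
  next
    case False
    then have T: "r < b" using br by auto
    have bt: "betw b r = {r<..<b}" unfolding betw_def using T by auto
    have f: "finite (B \<inter> {A..b})" "finite (R \<inter> {A..b})" using finB T by (auto simp: max_def)
    show ?thesis unfolding phi_def bt
      using split_count[OF f(1) A(2) T] split_count[OF f(2) A(2) T] cb by auto
  qed
qed

lemma dir:
  fixes B R :: "real set" and b1 b2 r0 :: real
  assumes disj: "B \<inter> R = {}"
    and loc_fin: "\<forall>a c. finite ((B \<union> R) \<inter> {a..c})"
    and b1: "b1 \<in> B" and b2: "b2 \<in> B"
    and r01: "r0 \<in> potential_matches B R b1" and r02: "r0 \<in> potential_matches B R b2"
  shows "potential_matches B R b1 \<subseteq> potential_matches B R b2"
proof
  fix r' assume r1: "r' \<in> potential_matches B R b1"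
  have finb: "\<And>b r. finite ((B \<union> R) \<inter> betw b r)"
  proof -
    fix b r
    have "(B \<union> R) \<inter> betw b r \<subseteq> (B \<union> R) \<inter> {min b r..max b r}" unfolding betw_def by auto
    then show "finite ((B \<union> R) \<inter> betw b r)" using loc_fin finite_subset by blast
  qed
  have balof: "\<And>b r. b \<in> B \<Longrightarrow> r \<in> potential_matches B R b \<Longrightarrow> r \<in> R \<and> card (B \<inter> betw b r) = card (R \<inter> betw b r)"
  proof -
    fix b r assume b: "b \<in> B" and "r \<in> potential_matches B R b"
    then obtain M where "r \<in> R" "is_matching B R M" "nested (B \<union> R) M" "M b = ereal r"
      unfolding potential_matches_def by blast
    then show "r \<in> R \<and> card (B \<inter> betw b r) = card (R \<inter> betw b r)"
      using nec[OF disj finb b] by blast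
  qed
  obtain h1: "r0 \<in> R" "card (B \<inter> betw b1 r0) = card (R \<inter> betw b1 r0)" using balof[OF b1 r01] by blast
  obtain h2: "card (B \<inter> betw b2 r0) = card (R \<inter> betw b2 r0)" using balof[OF b2 r02] by blast
  obtain h3: "r' \<in> R" "card (B \<inter> betw b1 r') = card (R \<inter> betw b1 r')" using balof[OF b1 r1] by blast
  define A where "A = min (min b1 b2) (min r0 r')"
  have fa: "\<And>c. finite ((B \<union> R) \<inter> {A..c})" using loc_fin by blast
  have p1: "phi B R A r0 = phi B R A b1 + 1" using pot[OF disj b1 h1(1) _ _ fa] h1(2) unfolding A_def by auto
  have p2: "phi B R A r0 = phi B R A b2 + 1" using pot[OF disj b2 h1(1) _ _ fa] h2 unfolding A_def by auto
  have p3: "phi B R A r' = phi B R A b1 + 1" using pot[OF disj b1 h3(1) _ _ fa] h3(2) unfolding A_def by auto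
  have p4: "phi B R A r' = phi B R A b2 + 1" using p1 p2 p3 by linarith
  have "A \<le> b2" "A \<le> r'" unfolding A_def by auto
  then have "card (B \<inter> betw b2 r') = card (R \<inter> betw b2 r')"
    using pot[OF disj b2 h3(1) _ _ fa] p4 by blast
  then show "r' \<in> potential_matches B R b2" using suff[OF disj finb b2 h3(1)] by blast
qed

theorem lemma4p3:
  fixes B R :: "real set" and b1 b2 :: real
  assumes disj: "B \<inter> R = {}"
    and loc_fin: "\<forall>a c. finite ((B \<union> R) \<inter> {a..c})"
    and "b1 \<in> B" and "b2 \<in> B"
    and "potential_matches B R b1 \<inter> potential_matches B R b2 \<noteq> {}"
  shows "potential_matches B R b1 = potential_matches B R b2"
proof -
  obtain r0 where "r0 \<in> potential_matches B R b1" "r0 \<in> potential_matches B R b2" using assms(5) by blast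
  then show ?thesis using dir[OF disj loc_fin] assms(3,4) by (metis subset_antisym)
qed

end
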